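(* Let $\mathsf S$ be a finite-dimensional system such that the composite $\mathsf S\odot\mathsf S$ admits a state $\Phi$ that is pure, symmetric under exchange of the two subsystems, and preparationally faithful. Then, for $\mathbb F=\mathbb R,\mathbb C$: - the linear space of transformations is full, $\mathfrak T_{\mathbb F}(\mathsf S)=\mathrm{Lin}(\mathfrak E_{\mathbb F}(\mathsf S))$ (all linear maps on $\mathfrak E_{\mathbb F}(\mathsf S)$); - $\mathfrak S_{\mathbb F}(\mathsf S\odot\mathsf S)=\mathfrak S_{\mathbb F}(\mathsf S)\otimes\mathfrak S_{\mathbb F}(\mathsf S)$; - $\mathfrak E_{\mathbb F}(\mathsf S\odot\mathsf S)=\mathfrak E_{\mathbb F}(\mathsf S)\otimes\mathfrak E_{\mathbb F}(\mathsf S)$.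
   Context: Single system $\mathsf S$. There is a real vector space $\mathfrak E_{\mathbb R}(\mathsf S)$ spanned by a convex cone $\mathfrak E_+(\mathsf S)$ of effects, with deterministic effect $e$. The state cone $\mathfrak S_+(\mathsf S)$ is the dual cone of $\mathfrak E_+$ (no-restriction hypothesis: states and effects are dual cones). The states are $\mathfrak S=\{\omega\in\mathfrak S_+:\omega(e)=1\}$. Transformations form a convex cone $\mathfrak T_+(\mathsf S)$ of linear maps on $\mathfrak E_{\mathbb R}$, written $a\mapsto a\circ\mathcal A$, acting on states by $(\mathcal A\omega)(a)=\omega(a\circ\mathcal A)$. The subscripts $\mathbb R,\mathbb C$ denote real and complex linear spans of the cones, and finite-dimensional means these spans are finite-dimensional. A pure state spans an extremal ray of the state cone. Composite systems. $\mathsf S\odot\mathsf S$ is again a system with its own cones of effects, states and transformations. It contains local effects $(a,b)=a\otimes b$ and local transformations $(\mathcal A,\mathcal B)$, which commute across subsystems. One has $\mathfrak Z_{\mathbb F}(\mathsf S)\otimes\mathfrak Z_{\mathbb F}(\mathsf S)\subseteq\mathfrak Z_{\mathbb F}(\mathsf S\odot\mathsf S)$ for $\mathfrak Z=\mathfrak E,\mathfrak S,\mathfrak T$. For a bipartite state $\Phi$ and transformations, $((\mathcal A,\mathcal B)\Phi)(E)=\Phi(E\circ(\mathcal A,\mathcal B))$. A bipartite state $\Phi$ is preparationally faithful (with respect to the first subsystem) if every bipartite state $\Psi$ can be written $\Psi=(\mathcal T_\Psi,\mathcal I)\Phi$ for some $\mathcal T_\Psi\in\mathfrak T_+(\mathsf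 S)$. It is symmetric if $\Phi(a,b)=\Phi(b,a)$ on local effects, i.e. it is invariant under swapping the subsystems. *)

theory Defs
  imports "HOL-Analysis.Analysis"
begin

text \<open>
  A system with coordinate type 'n has real effect space E_R = real^'n
  (the span of the effect cone), states/functionals are represented by
  vectors w acting as a \<mapsto> w \<bullet> a, and transformations are matrices
  M acting on effects by a \<mapsto> a \<circ> M = M *v a.
\<close>

definition dual_cone :: "('a::real_inner) set \<Rightarrow> 'a set" where
  "dual_cone C = {w. \<forall>a\<in>C. 0 \<le> w \<bullet> a}"

definition states :: "('a::real_inner) set \<Rightarrow> 'a \<Rightarrow> 'a set" where
  "states E e = {w \<in> dual_cone E. w \<bullet> e = 1}"

definition extremal_ray :: "('a::real_vector) set \<Rightarrow> 'a \<Rightarrow> bool" where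
  "extremal_ray C x \<longleftrightarrow> x \<in> C \<and> x \<noteq> 0 \<and>
     (\<forall>y z. y \<in> C \<longrightarrow> z \<in> C \<longrightarrow> y + z = x \<longrightarrow> (\<exists>c\<ge>0. y = c *\<^sub>R x))"

definition pure_state :: "('a::real_inner) set \<Rightarrow> 'a \<Rightarrow> 'a \<Rightarrow> bool" where
  "pure_state E e w \<longleftrightarrow> w \<in> states E e \<and> extremal_ray (dual_cone E) w"

definition opt_system :: "(real^'n) set \<Rightarrow> real^'n \<Rightarrow> (real^'n^'n) set \<Rightarrow> bool" where
  "opt_system E e T \<longleftrightarrow>
     convex_cone E \<and> span E = UNIV \<and> e \<in> E \<and>
     (\<forall>a. (\<forall>w\<in>states E e. w \<bullet> a = 0) \<longrightarrow> a = 0) \<and>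
     convex_cone T \<and> mat 1 \<in> T \<and> (\<forall>A\<in>T. \<forall>B\<in>T. A ** B \<in> T) \<and>
     (\<forall>A\<in>T. \<forall>a\<in>E. A *v a \<in> E)"

text \<open>A bilinear map f whose linear extension to the tensor product is injective,
  i.e. it realises Z(S) \<otimes> Z(S) \<subseteq> Z(S\<odot>S).\<close>

definition tensor_embedding ::
  "('a::euclidean_space \<Rightarrow> 'a \<Rightarrow> 'c::real_vector) \<Rightarrow> bool" where
  "tensor_embedding f \<longleftrightarrow> bilinear f \<and>
     (\<forall>c. (\<Sum>u\<in>Basis. \<Sum>v\<in>Basis. c u v *\<^sub>R f u v) = 0 \<longrightarrow>
          (\<forall>u\<in>Basis. \<forall>v\<in>Basis. c u v = 0))"

text \<open>The composite S \<odot> S (system with effect cone E2, deterministic effect e2,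
  transformations T2) with local effects loc a b = (a,b), product states
  locS w v = w \<otimes> v and local transformations locT A B = (A,B).\<close>

definition opt_composite ::
  "(real^'n) set \<Rightarrow> real^'n \<Rightarrow> (real^'n^'n) set \<Rightarrow>
   (real^'k) set \<Rightarrow> real^'k \<Rightarrow> (real^'k^'k) set \<Rightarrow>
   (real^'n \<Rightarrow> real^'n \<Rightarrow> real^'k) \<Rightarrow>
   (real^'n \<Rightarrow> real^'n \<Rightarrow> real^'k) \<Rightarrow>
   (real^'n^'n \<Rightarrow> real^'n^'n \<Rightarrow> real^'k^'k) \<Rightarrow> bool" where
  "opt_composite E e T E2 e2 T2 loc locS locT \<longleftrightarrow>
     opt_system E e T \<and> opt_system E2 e2 T2 \<and>
     tensor_embedding loc \<and> (\<forall>a\<in>E. \<forall>b\<in>E. loc a b \<in> E2) \<and> e2 = loc e e \<and>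
     bilinear locS \<and> (\<forall>w v a b. locS w v \<bullet> loc a b = (w \<bullet> a) * (v \<bullet> b)) \<and>
     (\<forall>w\<in>dual_cone E. \<forall>v\<in>dual_cone E. locS w v \<in> dual_cone E2) \<and>
     tensor_embedding locT \<and> (\<forall>A\<in>T. \<forall>B\<in>T. locT A B \<in> T2) \<and>
     (\<forall>A B a b. locT A B *v loc a b = loc (A *v a) (B *v b)) \<and>
     (\<forall>A B. locT A (mat 1) ** locT (mat 1) B = locT A B \<and>
            locT (mat 1) B ** locT A (mat 1) = locT A B)"

definition symmetric_state ::
  "(real^'n \<Rightarrow> real^'n \<Rightarrow> real^'k) \<Rightarrow> real^'k \<Rightarrow> bool" where
  "symmetric_state loc \<Phi> \<longleftrightarrow> (\<forall>a b. \<Phi> \<bullet> loc a b = \<Phi> \<bullet> loc b a)"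

text \<open>Preparationally faithful w.r.t. the first subsystem:
  every bipartite state \<Psi> equals (T_\<Psi>, I)\<Phi>, i.e. \<Psi>(X) = \<Phi>(X \<circ> (T_\<Psi>, I)).\<close>

definition prep_faithful ::
  "(real^'k) set \<Rightarrow> real^'k \<Rightarrow> (real^'n^'n) set \<Rightarrow>
   (real^'n^'n \<Rightarrow> real^'n^'n \<Rightarrow> real^'k^'k) \<Rightarrow> real^'k \<Rightarrow> bool" where
  "prep_faithful E2 e2 T locT \<Phi> \<longleftrightarrow>
     (\<forall>\<Psi>\<in>states E2 e2. \<exists>Tm\<in>T. \<forall>X. \<Psi> \<bullet> X = \<Phi> \<bullet> (locT Tm (mat 1) *v X))"

definition cvec :: "real^'k \<Rightarrow> complex^'k" where
  "cvec v = (\<chi> i. complex_of_real (v $ i))"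

definition cmat :: "real^'n^'n \<Rightarrow> complex^'n^'n" where
  "cmat M = (\<chi> i j. complex_of_real (M $ i $ j))"

definition cvspan :: "(complex^'k) set \<Rightarrow> (complex^'k) set" where
  "cvspan S = module.span (\<lambda>c v. c *s v) S"

definition cmspan :: "(complex^'n^'n) set \<Rightarrow> (complex^'n^'n) set" where
  "cmspan S = module.span (\<lambda>c M. \<chi> i. c *s (M $ i)) S"

end

theory Submission
  imports Defs
begin


lemma span_full_of_sep:
  fixes S :: "'a::euclidean_space set"
  assumes "\<forall>a. (\<forall>w\<in>S. w \<bullet> a = 0) \<longrightarrow> a = 0"
  shows "span S = UNIV"
proof (rule ccontr)
  assume "span S \<noteq> UNIV"
  then obtain a where a: "a \<noteq> 0" "\<forall>x\<in>span S. a \<bullet> x = 0"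
    using span_not_UNIV_orthogonal by blast
  have "\<forall>w\<in>S. w \<bullet> a = 0" using a(2) span_base by (metis inner_commute)
  with assms a(1) show False by blast
qed

lemma bilinear_span_mem:
  assumes bf: "bilinear f" and a: "a \<in> span A" and b: "b \<in> span B"
  shows "f a b \<in> span {f x y | x y. x \<in> A \<and> y \<in> B}"
proof -
  let ?P = "{f x y | x y. x \<in> A \<and> y \<in> B}"
  have l1: "linear (\<lambda>x. f x y)" for y using bf unfolding bilinear_def by blast
  have l2: "linear (f x)" for x using bf unfolding bilinear_def by blast
  have step1: "f a y \<in> span ?P" if "y \<in> B" for y
  proof -
    have "f a y \<in> (\<lambda>x. f x y) ` span A" using a by blast
    also have "\<dots> = span ((\<lambda>x. f x y) ` A)" using span_linear_image[OF l1] by simp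
    also have "\<dots> \<subseteq> span ?P" by (rule span_mono) (use that in blast)
    finally show ?thesis .
  qed
  have "f a b \<in> f a ` span B" using b by blast
  also have "\<dots> = span (f a ` B)" using span_linear_image[OF l2] by simp
  also have "\<dots> \<subseteq> span ?P" using step1 by (intro span_minimal) auto
  finally show ?thesis .
qed

lemma cvec_simps: "cvec 0 = 0" "cvec (x + y) = cvec x + cvec y"
  "cvec (c *\<^sub>R x) = complex_of_real c *s cvec x"
  by (simp_all add: cvec_def vec_eq_iff)

lemma cmat_simps: "cmat 0 = 0" "cmat (x + y) = cmat x + cmat y"
  "cmat (c *\<^sub>R x) = (\<chi> i. complex_of_real c *s (cmat x $ i))"
  by (simp_all add: cmat_def vec_eq_iff)

lemma cv_full:
  fixes S :: "(real^'k) set"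
  assumes "span S = UNIV"
  shows "cvspan (cvec ` S) = UNIV"
proof -
  have sub: "cvec y \<in> vec.span (cvec ` S)" for y
  proof -
    have "y \<in> span S" using assms by simp
    then show ?thesis
    proof (rule span_induct)
      show "subspace {y. cvec y \<in> vec.span (cvec ` S)}"
        unfolding subspace_def
        by (auto simp: cvec_simps vec.span_zero vec.span_add vec.span_scale)
    qed (auto intro: vec.span_base)
  qed
  have "x \<in> vec.span (cvec ` S)" for x :: "complex^'k"
  proof -
    have "x = (\<Sum>i\<in>UNIV. (x $ i) *s cvec (axis i 1))"
      by (simp add: vec_eq_iff cvec_def axis_def if_distrib cong: if_cong)
    also have "\<dots> \<in> vec.span (cvec ` S)"
      by (intro vec.span_sum vec.span_scale sub)
    finally show ?thesis .
  qed
  then show ?thesis unfolding cvspan_def by auto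
qed

interpretation mscale: module "\<lambda>c (M::complex^'n^'n). \<chi> i. c *s (M $ i)"
  by unfold_locales (simp_all add: vec_eq_iff algebra_simps)

lemma cm_full:
  fixes S :: "(real^'n^'n) set"
  assumes "span S = UNIV"
  shows "cmspan (cmat ` S) = UNIV"
proof -
  let ?sc = "\<lambda>c (M::complex^'n^'n). \<chi> i. c *s (M $ i)"
  have sub: "cmat y \<in> mscale.span (cmat ` S)" for y
  proof -
    have "y \<in> span S" using assms by simp
    then show ?thesis
    proof (rule span_induct)
      show "subspace {y. cmat y \<in> mscale.span (cmat ` S)}"
        unfolding subspace_def
        by (auto simp: cmat_simps mscale.span_zero mscale.span_add mscale.span_scale)
    qed (auto intro: mscale.span_base)
  qed
  have "x \<in> mscale.span (cmat ` S)" for x :: "complex^'n^'n"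
  proof -
    have "x = (\<Sum>i\<in>UNIV. \<Sum>j\<in>UNIV. ?sc (x $ i $ j) (cmat (axis i (axis j 1))))"
    proof -
      have ax: "cmat (axis i (axis j 1)) $ a $ b = (if a = i then (if b = j then 1 else 0) else 0)"
        for i j a b :: 'n
        by (simp add: cmat_def axis_def)
      have eq: "(\<Sum>i\<in>UNIV. \<Sum>j\<in>UNIV. x $ i $ j * (if a = i then (if b = j then 1 else 0) else 0)) = x $ a $ b" for a b
      proof -
        have inner: "(\<Sum>j\<in>UNIV. x $ i $ j * (if a = i then (if b = j then 1 else 0) else 0)) = (if i = a then x $ i $ b else 0)" for i
          by (cases "i = a") (simp_all add: mult_delta_right)
        show ?thesis by (simp only: inner) simp
      qed
      show ?thesis
      proof (subst vec_eq_iff, intro allI, subst vec_eq_iff, intro allI)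
        fix a b
        have "(\<Sum>i\<in>UNIV. \<Sum>j\<in>UNIV. ?sc (x $ i $ j) (cmat (axis i (axis j 1)))) $ a $ b
           = (\<Sum>i\<in>UNIV. \<Sum>j\<in>UNIV. x $ i $ j * cmat (axis i (axis j 1)) $ a $ b)" by simp
        also have "\<dots> = x $ a $ b" unfolding ax by (rule eq)
        finally show "x $ a $ b = (\<Sum>i\<in>UNIV. \<Sum>j\<in>UNIV. ?sc (x $ i $ j) (cmat (axis i (axis j 1)))) $ a $ b" by simp
      qed
    qed
    also have "\<dots> \<in> mscale.span (cmat ` S)"
      by (intro mscale.span_sum mscale.span_scale sub)
    finally show ?thesis .
  qed
  then show ?thesis unfolding cmspan_def by auto
qed



lemma axis_entry: "axis i (1::real) \<bullet> ((M::real^'n^'n) *v axis j 1) = M $ i $ j"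
proof -
  have a: "axis i 1 \<bullet> y = y $ i" for y :: "real^'n" by (simp add: inner_commute inner_axis)
  have b: "(M *v axis j 1) $ i = M $ i $ j"
    by (simp add: matrix_vector_mult_def axis_def mult_delta_right)
  show ?thesis using a b by simp
qed

lemma emb_dim:
  fixes f :: "real^'n \<Rightarrow> real^'n \<Rightarrow> 'c::euclidean_space"
  assumes bf: "bilinear f"
    and inj: "\<forall>c. (\<Sum>u\<in>Basis. \<Sum>v\<in>Basis. c u v *\<^sub>R f u v) = 0 \<longrightarrow> (\<forall>u\<in>Basis. \<forall>v\<in>Basis. c u v = 0)"
  shows "DIM(real^'n^'n) \<le> dim {f u v | u v. u \<in> Basis \<and> v \<in> Basis}"
proof -
  define G where "G M = (\<Sum>u\<in>Basis. \<Sum>v\<in>Basis. (u \<bullet> ((M::real^'n^'n) *v v)) *\<^sub>R f u v)" for M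
  have lin: "linear G"
  proof (rule linearI)
    show "G (A + B) = G A + G B" for A B
      by (simp add: G_def matrix_vector_mult_add_rdistrib inner_add_right scaleR_add_left sum.distrib)
    show "G (c *\<^sub>R A) = c *\<^sub>R G A" for c A
      by (simp add: G_def scaleR_matrix_vector_assoc[symmetric] scaleR_sum_right)
  qed
  have injG: "inj G"
    unfolding linear_injective_0[OF lin]
  proof (intro allI impI)
    fix M assume "G M = 0"
    then have c0: "\<forall>u\<in>Basis. \<forall>v\<in>Basis. u \<bullet> (M *v v) = 0"
      using inj[rule_format, of "\<lambda>u v. u \<bullet> (M *v v)"] unfolding G_def by blast
    show "M = 0"
    proof (subst vec_eq_iff, intro allI, subst vec_eq_iff, intro allI)
      fix i j
      have "(axis i (1::real) :: real^'n) \<in> Basis" "(axis j (1::real) :: real^'n) \<in> Basis"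
        by (auto simp: Basis_vec_def)
      then have "M $ i $ j = 0" using c0 axis_entry by metis
      then show "M $ i $ j = 0 $ i $ j" by simp
    qed
  qed
  have "range G \<subseteq> span {f u v | u v. u \<in> Basis \<and> v \<in> Basis}"
  proof -
    have "G M \<in> span {f u v | u v. u \<in> Basis \<and> v \<in> Basis}" for M
      unfolding G_def
    proof (rule span_sum, rule span_sum, rule span_scale, rule span_base)
      fix u v assume "u \<in> (Basis :: (real^'n) set)" "v \<in> (Basis :: (real^'n) set)"
      then show "f u v \<in> {f u v | u v. u \<in> Basis \<and> v \<in> Basis}" by blast
    qed
    then show ?thesis by blast
  qed
  then have "dim (range G) \<le> dim {f u v | u v. u \<in> Basis \<and> v \<in> Basis}"
    using dim_subset[of "range G" "span {f u v | u v. u \<in> Basis \<and> v \<in> Basis}"] dim_span by simp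
  moreover have "dim (range G) = DIM(real^'n^'n)"
  proof -
    have "inj_on G (span UNIV)" using injG by (simp add: inj_on_def inj_def)
    then have "dim (G ` UNIV) = dim (UNIV :: (real^'n^'n) set)" by (rule dim_image_eq[OF lin])
    then show ?thesis by (simp only: dim_UNIV)
  qed
  ultimately show ?thesis by simp
qed


lemma coef_locS:
  fixes loc locS :: "real^'n \<Rightarrow> real^'n \<Rightarrow> real^'k"
  assumes f: "\<forall>w v a b. locS w v \<bullet> loc a b = (w \<bullet> a) * (v \<bullet> b)"
  shows "\<forall>c. (\<Sum>u\<in>Basis. \<Sum>v\<in>Basis. c u v *\<^sub>R locS u v) = 0 \<longrightarrow> (\<forall>u\<in>Basis. \<forall>v\<in>Basis. c u v = 0)"
proof (intro allI impI ballI)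
  fix c :: "real^'n \<Rightarrow> real^'n \<Rightarrow> real" and u0 v0 :: "real^'n"
  assume z: "(\<Sum>u\<in>Basis. \<Sum>v\<in>Basis. c u v *\<^sub>R locS u v) = 0" and u0: "u0 \<in> Basis" and v0: "v0 \<in> Basis"
  have "0 = (\<Sum>u\<in>Basis. \<Sum>v\<in>Basis. c u v *\<^sub>R locS u v) \<bullet> loc u0 v0" using z by simp
  also have "\<dots> = (\<Sum>u\<in>Basis. \<Sum>v\<in>Basis. c u v * ((u \<bullet> u0) * (v \<bullet> v0)))"
    by (simp add: inner_sum_left f)
  also have "\<dots> = (\<Sum>u\<in>Basis. if u = u0 then c u v0 else 0)"
  proof (rule sum.cong[OF refl])
    fix u :: "real^'n" assume u: "u \<in> Basis"
    have "(\<Sum>v\<in>Basis. c u v * ((u \<bullet> u0) * (v \<bullet> v0))) = (\<Sum>v\<in>Basis. if v = v0 then c u v * (u \<bullet> u0) else 0)"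
      by (rule sum.cong[OF refl]) (simp add: inner_Basis v0)
    also have "\<dots> = c u v0 * (u \<bullet> u0)" using v0 by simp
    also have "\<dots> = (if u = u0 then c u v0 else 0)" using u u0 by (simp add: inner_Basis)
    finally show "(\<Sum>v\<in>Basis. c u v * ((u \<bullet> u0) * (v \<bullet> v0))) = (if u = u0 then c u v0 else 0)" .
  qed
  also have "\<dots> = c u0 v0" using u0 by simp
  finally show "c u0 v0 = 0" by simp
qed


theorem mainTheorem7:
  fixes E :: "(real^'n) set" and e :: "real^'n" and T :: "(real^'n^'n) set"
    and E2 :: "(real^'k) set" and e2 :: "real^'k" and T2 :: "(real^'k^'k) set"
    and loc :: "real^'n \<Rightarrow> real^'n \<Rightarrow> real^'k"
    and locS :: "real^'n \<Rightarrow> real^'n \<Rightarrow> real^'k"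
    and locT :: "real^'n^'n \<Rightarrow> real^'n^'n \<Rightarrow> real^'k^'k"
    and \<Phi> :: "real^'k"
  assumes "opt_composite E e T E2 e2 T2 loc locS locT"
    and "pure_state E2 e2 \<Phi>"
    and "symmetric_state loc \<Phi>"
    and "prep_faithful E2 e2 T locT \<Phi>"
  shows "span T = UNIV \<and>
         span (dual_cone E2) = span {locS w v | w v. w \<in> dual_cone E \<and> v \<in> dual_cone E} \<and>
         span E2 = span {loc a b | a b. a \<in> E \<and> b \<in> E} \<and>
         cmspan (cmat ` T) = UNIV \<and>
         cvspan (cvec ` dual_cone E2) =
           cvspan {cvec (locS w v) | w v. w \<in> dual_cone E \<and> v \<in> dual_cone E} \<and>
         cvspan (cvec ` E2) = cvspan {cvec (loc a b) | a b. a \<in> E \<and> b \<in> E}"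
proof -
  note C = assms(1)[unfolded opt_composite_def]
  have sys1: "opt_system E e T" and sys2: "opt_system E2 e2 T2"
    and temb: "tensor_embedding loc" and bS: "bilinear locS"
    and fS: "\<forall>w v a b. locS w v \<bullet> loc a b = (w \<bullet> a) * (v \<bullet> b)"
    and tembT: "tensor_embedding locT"
    using C by blast+
  have spanE: "span E = UNIV" using sys1 unfolding opt_system_def by blast
  have spanE2: "span E2 = UNIV" using sys2 unfolding opt_system_def by blast
  have bL: "bilinear loc" using temb unfolding tensor_embedding_def by blast
  have bT: "bilinear locT" using tembT unfolding tensor_embedding_def by blast
  have sepE: "\<forall>a. (\<forall>w\<in>states E e. w \<bullet> a = 0) \<longrightarrow> a = 0" using sys1 unfolding opt_system_def by blast
  have sepE2: "\<forall>a. (\<forall>w\<in>states E2 e2. w \<bullet> a = 0) \<longrightarrow> a = 0" using sys2 unfolding opt_system_def by blast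
  have stE: "span (states E e) = UNIV" by (rule span_full_of_sep[OF sepE])
  have stE2: "span (states E2 e2) = UNIV" by (rule span_full_of_sep[OF sepE2])
  have dcE: "span (dual_cone E) = UNIV"
    using span_mono[of "states E e" "dual_cone E"] stE unfolding states_def by auto
  have dcE2: "span (dual_cone E2) = UNIV"
    using span_mono[of "states E2 e2" "dual_cone E2"] stE2 unfolding states_def by auto
  define L where "L = (\<lambda>M. \<Phi> v* M) \<circ> (\<lambda>A. locT A (mat 1))"
  have lin1: "linear (\<lambda>A. locT A (mat 1))" using bT unfolding bilinear_def by blast
  have lin2: "linear (\<lambda>M::real^'k^'k. \<Phi> v* M)"
    by (rule linearI) (simp_all add: vector_matrix_mult_add_rdistrib vector_scaleR_matrix_ac)
  have linL: "linear L" unfolding L_def by (rule linear_compose[OF lin1 lin2])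
  have stsub: "states E2 e2 \<subseteq> L ` T"
  proof
    fix \<Psi> assume "\<Psi> \<in> states E2 e2"
    then obtain Tm where Tm: "Tm \<in> T" "\<forall>X. \<Psi> \<bullet> X = \<Phi> \<bullet> (locT Tm (mat 1) *v X)"
      using assms(4) unfolding prep_faithful_def by blast
    have "\<Psi> = L Tm"
    proof (rule euclidean_eqI)
      fix b :: "real^'k"
      show "\<Psi> \<bullet> b = L Tm \<bullet> b" using Tm(2) by (simp add: L_def dot_lmul_matrix)
    qed
    then show "\<Psi> \<in> L ` T" using Tm(1) by blast
  qed
  have "(UNIV :: (real^'k) set) \<subseteq> span (L ` T)"
    using span_mono[OF stsub] stE2 by simp
  also have "span (L ` T) = L ` span T" by (rule span_linear_image[OF linL])
  finally have "dim (UNIV :: (real^'k) set) \<le> dim (L ` span T)" by (rule dim_subset)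
  also have "\<dots> \<le> dim (span T)" by (rule dim_image_le[OF linL])
  also have "\<dots> = dim T" by (rule dim_span)
  finally have d1: "DIM(real^'k) \<le> dim T" by (simp only: dim_UNIV)
  have temb_coef: "\<forall>c. (\<Sum>u\<in>Basis. \<Sum>v\<in>Basis. c u v *\<^sub>R loc u v) = 0 \<longrightarrow> (\<forall>u\<in>Basis. \<forall>v\<in>Basis. c u v = 0)"
    using temb unfolding tensor_embedding_def by blast
  have d2: "DIM(real^'n^'n) \<le> dim {loc u v | u v. u \<in> Basis \<and> v \<in> Basis}"
    by (rule emb_dim[OF bL temb_coef])
  have d3: "DIM(real^'n^'n) \<le> dim {locS u v | u v. u \<in> Basis \<and> v \<in> Basis}"
    by (rule emb_dim[OF bS coef_locS[OF fS]])
  have d4: "dim {loc u v | u v. u \<in> Basis \<and> v \<in> Basis} \<le> DIM(real^'k)" by (rule dim_subset_UNIV)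
  have d5: "dim {locS u v | u v. u \<in> Basis \<and> v \<in> Basis} \<le> DIM(real^'k)" by (rule dim_subset_UNIV)
  have d6: "dim T \<le> DIM(real^'n^'n)" by (rule dim_subset_UNIV)
  have spanT: "span T = UNIV" using d1 d2 d4 d6 dim_eq_full[of T] by linarith
  have sB: "span {loc u v | u v. u \<in> Basis \<and> v \<in> Basis} = UNIV"
    using d1 d2 d4 d6 dim_eq_full[of "{loc u v | u v. u \<in> Basis \<and> v \<in> Basis}"] by linarith
  have sBS: "span {locS u v | u v. u \<in> Basis \<and> v \<in> Basis} = UNIV"
    using d1 d3 d5 d6 dim_eq_full[of "{locS u v | u v. u \<in> Basis \<and> v \<in> Basis}"] by linarith
  have pE: "span {loc a b | a b. a \<in> E \<and> b \<in> E} = UNIV"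
  proof -
    have "{loc u v | u v. u \<in> Basis \<and> v \<in> Basis} \<subseteq> span {loc a b | a b. a \<in> E \<and> b \<in> E}"
      using bilinear_span_mem[OF bL, of _ E _ E] spanE by blast
    then have "span {loc u v | u v. u \<in> Basis \<and> v \<in> Basis} \<subseteq> span {loc a b | a b. a \<in> E \<and> b \<in> E}"
      by (rule span_minimal) simp
    then show ?thesis using sB by auto
  qed
  have pS: "span {locS w v | w v. w \<in> dual_cone E \<and> v \<in> dual_cone E} = UNIV"
  proof -
    have "{locS u v | u v. u \<in> Basis \<and> v \<in> Basis} \<subseteq> span {locS w v | w v. w \<in> dual_cone E \<and> v \<in> dual_cone E}"
      using bilinear_span_mem[OF bS, of _ "dual_cone E" _ "dual_cone E"] dcE by blast
    then have "span {locS u v | u v. u \<in> Basis \<and> v \<in> Basis} \<subseteq> span {locS w v | w v. w \<in> dual_cone E \<and> v \<in> dual_cone E}"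
      by (rule span_minimal) simp
    then show ?thesis using sBS by auto
  qed
  have e1: "{cvec (locS w v) | w v. w \<in> dual_cone E \<and> v \<in> dual_cone E} = cvec ` {locS w v | w v. w \<in> dual_cone E \<and> v \<in> dual_cone E}"
    by blast
  have e2: "{cvec (loc a b) | a b. a \<in> E \<and> b \<in> E} = cvec ` {loc a b | a b. a \<in> E \<and> b \<in> E}"
    by blast
  show ?thesis
    using spanT dcE2 pS spanE2 pE cm_full[OF spanT] cv_full[OF dcE2] cv_full[OF pS] cv_full[OF spanE2] cv_full[OF pE]
    unfolding e1 e2 by simp
qed

end
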